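(* Fix $d,k\in\mathbb N$ and let $A\in\mathbb R^{d^k\times d^k}$. Let $x=x_1\otimes\cdots\otimes x_k$, where $x_1,\dots,x_k\in\mathbb R^d$ are independent and each $x_i$ is either a Rademacher vector or a $\mathcal N(0,I_d)$ Gaussian vector. Then $$\operatorname{Var}[x^\top A x]\le\sum_{\mathcal S\subsetneq[k]}2^{k-|\mathcal S|}\,\big\|\operatorname{tr}_{\mathcal S}(A)\big\|_F^2 .$$ Furthermore, if all $x_i$ are $\mathcal N(0,I_d)$ and $A=\bar A$, then this is an equality, where $\bar A:=\frac1{2^k}\sum_{\mathcal V\subseteq[k]}A^{\Gamma_{\mathcal V}}$.
   Context: $\otimes$ is the standard Kronecker product; $[k]=\{1,\dots,k\}$. A Rademacher vector has iid entries uniform on $\{\pm1\}$. Partial trace: for $\mathcal S\subseteq[k]$, $\operatorname{tr}_{\mathcal S}:\mathbb R^{d^k\times d^k}\to\mathbb R^{d^{k-|\mathcal S|}\times d^{k-|\mathcal S|}}$ is the unique linear map with $\operatorname{tr}_{\mathcal S}(M_1\otimes\cdots\otimes M_k)=\big(\prod_{j\in\mathcal S}\operatorname{tr}(M_j)\big)\bigotimes_{j\notin\mathcal S}M_j$ for all $M_j\in\mathbb R^{d\times d}$. Partial transpose: for $\mathcal V\subseteq[k]$, $A\mapsto A^{\Gamma_{\mathcal V}}$ is the unique linear map with $(M_1\otimes\cdots\otimes M_k)^{\Gamma_{\mathcal V}}=N_1\otimes\cdots\otimes N_k$, $N_j=M_j^\top$ if $j\in\mathcal V$, $N_j=M_j$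 otherwise. The sum ranges over all proper subsets $\mathcal S$ of $[k]$ (including $\emptyset$). *)

theory Defs
  imports "HOL-Probability.Probability"
begin

text \<open>Coordinates of \<open>\<real>^(d^k)\<close> are indexed by multi-indices
  \<open>i \<in> {1..k} \<rightarrow>\<^sub>E {..<d}\<close> (the Kronecker product corresponds to the
  lexicographic ordering of these multi-indices). A matrix in \<open>\<real>^(d^k \<times> d^k)\<close>
  is a function of two multi-indices; a matrix acting on the factors \<open>K \<subseteq> {1..k}\<close>
  is indexed by multi-indices in \<open>K \<rightarrow>\<^sub>E {..<d}\<close>.\<close>

type_synonym mindex = "nat \<Rightarrow> nat"
type_synonym tmat = "mindex \<Rightarrow> mindex \<Rightarrow> real"

definition midx :: "nat set \<Rightarrow> nat \<Rightarrow> mindex set" where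
  "midx K d = K \<rightarrow>\<^sub>E {..<d}"

definition glue :: "nat set \<Rightarrow> mindex \<Rightarrow> mindex \<Rightarrow> mindex" where
  "glue S i t = (\<lambda>l. if l \<in> S then t l else i l)"

definition ptrace :: "nat \<Rightarrow> nat set \<Rightarrow> tmat \<Rightarrow> tmat" where
  "ptrace d S A = (\<lambda>i j. \<Sum>t\<in>midx S d. A (glue S i t) (glue S j t))"

definition ptransp :: "nat set \<Rightarrow> tmat \<Rightarrow> tmat" where
  "ptransp V A = (\<lambda>i j. A (glue V i j) (glue V j i))"

definition frob2 :: "nat set \<Rightarrow> nat \<Rightarrow> tmat \<Rightarrow> real" where
  "frob2 K d B = (\<Sum>i\<in>midx K d. \<Sum>j\<in>midx K d. (B i j)\<^sup>2)"

definition abar :: "nat \<Rightarrow> tmat \<Rightarrow> tmat" where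
  "abar k A = (\<lambda>i j. (1 / 2 ^ k) * (\<Sum>V\<in>Pow {1..k}. ptransp V A i j))"

definition rademacher_rv :: "'a measure \<Rightarrow> ('a \<Rightarrow> real) \<Rightarrow> bool" where
  "rademacher_rv M Y \<longleftrightarrow> Y \<in> borel_measurable M \<and>
     (AE \<omega> in M. Y \<omega> = 1 \<or> Y \<omega> = -1) \<and>
     measure M {\<omega> \<in> space M. Y \<omega> = 1} = 1 / 2"

text \<open>Tensor product vector \<open>x = x_1 \<otimes> \<dots> \<otimes> x_k\<close>, where \<open>X l a\<close> is entry \<open>a\<close> of \<open>x_l\<close>.\<close>
definition tensvec :: "nat \<Rightarrow> (nat \<Rightarrow> nat \<Rightarrow> 'a \<Rightarrow> real) \<Rightarrow> 'a \<Rightarrow> mindex \<Rightarrow> real" where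
  "tensvec k X \<omega> i = (\<Prod>l\<in>{1..k}. X l (i l) \<omega>)"

definition qform :: "nat \<Rightarrow> nat \<Rightarrow> tmat \<Rightarrow> (nat \<Rightarrow> nat \<Rightarrow> 'a \<Rightarrow> real) \<Rightarrow> 'a \<Rightarrow> real" where
  "qform d k A X \<omega> = (\<Sum>i\<in>midx {1..k} d. \<Sum>j\<in>midx {1..k} d.
      tensvec k X \<omega> i * A i j * tensvec k X \<omega> j)"

end

theory Submission
  imports Defs
begin

definition gm :: "nat \<Rightarrow> real" where
  "gm m = (if odd m then 0 else fact m / (2 ^ (m div 2) * fact (m div 2)))"
definition rm :: "nat \<Rightarrow> real" where
  "rm m = (if odd m then 0 else 1)"

lemma (in prob_space) mom_gauss:
  assumes "distributed M lborel Y std_normal_density"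
  shows "integrable M (\<lambda>\<omega>. Y \<omega> ^ m) \<and> expectation (\<lambda>\<omega>. Y \<omega> ^ m) = gm m"
proof
  have nn: "\<And>x. 0 \<le> std_normal_density x" by (simp add: normal_density_nonneg)
  show "integrable M (\<lambda>\<omega>. Y \<omega> ^ m)"
    using distributed_integrable[OF assms, of "\<lambda>x. x ^ m"] nn integrable_std_normal_moment[of m]
    by simp
  have "expectation (\<lambda>\<omega>. Y \<omega> ^ m) = (\<integral>x. std_normal_density x * x ^ m \<partial>lborel)"
    using distributed_integral[OF assms, of "\<lambda>x. x ^ m"] nn by simp
  also have "\<dots> = gm m"
  proof (cases "odd m")
    case True
    then obtain q where "m = 2 * q + 1" by (metis oddE)
    then show ?thesis using integral_std_normal_moment_odd[of q] by (simp add: gm_def)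
  next
    case False
    then obtain q where "m = 2 * q" by (metis evenE)
    then show ?thesis using integral_std_normal_moment_even[of q] by (simp add: gm_def)
  qed
  finally show "expectation (\<lambda>\<omega>. Y \<omega> ^ m) = gm m" .
qed

lemma (in prob_space) mom_rad:
  assumes "rademacher_rv M Y"
  shows "integrable M (\<lambda>\<omega>. Y \<omega> ^ m) \<and> expectation (\<lambda>\<omega>. Y \<omega> ^ m) = rm m"
proof -
  have meas[measurable]: "Y \<in> borel_measurable M" and ae: "AE \<omega> in M. Y \<omega> = 1 \<or> Y \<omega> = -1"
    and p: "prob {\<omega> \<in> space M. Y \<omega> = 1} = 1/2"
    using assms by (auto simp: rademacher_rv_def)
  have ae2: "AE \<omega> in M. Y \<omega> ^ m = (if even m then 1 else 2 * indicator {\<omega> \<in> space M. Y \<omega> = 1} \<omega> - 1)"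
    using ae AE_space by eventually_elim (auto simp: indicator_def)
  have ev[measurable]: "{\<omega> \<in> space M. Y \<omega> = 1} \<in> events" by measurable
  have int: "integrable M (\<lambda>\<omega>. (if even m then 1 else 2 * indicator {\<omega> \<in> space M. Y \<omega> = 1} \<omega> - 1) :: real)"
    by (cases "even m") (auto intro!: integrable_diff integrable_mult_right simp: emeasure_eq_measure)
  have "integrable M (\<lambda>\<omega>. Y \<omega> ^ m)"
    using integrable_cong_AE[OF _ _ ae2] int by simp
  moreover have "expectation (\<lambda>\<omega>. Y \<omega> ^ m) = rm m"
  proof -
    have "expectation (\<lambda>\<omega>. Y \<omega> ^ m) = expectation (\<lambda>\<omega>. (if even m then 1 else 2 * indicator {\<omega> \<in> space M. Y \<omega> = 1} \<omega> - 1))"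
      by (rule integral_cong_AE) (use ae2 in auto)
    also have "\<dots> = rm m"
    proof (cases "even m")
      case True then show ?thesis by (simp add: rm_def prob_space)
    next
      case False
      have "expectation (\<lambda>\<omega>. 2 * indicator {\<omega> \<in> space M. Y \<omega> = 1} \<omega> - 1 :: real) = 
           2 * prob {\<omega> \<in> space M. Y \<omega> = 1} - 1"
        using ev by (subst Bochner_Integration.integral_diff) (auto simp: prob_space emeasure_eq_measure intro!: integrable_mult_right)
      then show ?thesis using False p by (simp add: rm_def)
    qed
    finally show ?thesis .
  qed
  ultimately show ?thesis by blast
qed



lemma pow01: "(x::real) ^ (if c then 1 else 0) = (if c then x else 1)" by simp

lemma prod_delta_aux: "a < (d::nat) \<Longrightarrow> (\<Prod>y<d. if a = y then f y else 1) = (f a :: real)"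
  by (subst prod.delta') auto

lemma prod_count:
  assumes "\<And>t. t < n \<Longrightarrow> p t < (d::nat)"
  shows "(\<Prod>t<(n::nat). f (p t) :: real) = (\<Prod>y<d. f y ^ (\<Sum>t<n. if p t = y then 1 else 0))"
proof -
  have "(\<Prod>y<d. f y ^ (\<Sum>t<n. if p t = y then 1 else 0)) = (\<Prod>y<d. \<Prod>t<n. (if p t = y then f y else 1))"
    by (simp add: power_sum pow01)
  also have "\<dots> = (\<Prod>t<n. \<Prod>y<d. (if p t = y then f y else 1))"
    by (rule prod.swap)
  also have "\<dots> = (\<Prod>t<n. f (p t))"
    using assms by (intro prod.cong refl) (simp add: prod_delta_aux)
  finally show ?thesis by simp
qed

lemma (in prob_space) prod_expect:
  fixes X :: "nat \<Rightarrow> nat \<Rightarrow> 'a \<Rightarrow> real" and n d k :: nat and p :: "nat \<Rightarrow> nat \<Rightarrow> nat"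
  assumes indep: "indep_vars (\<lambda>_. borel) (\<lambda>(l, a). X l a) ({1..k} \<times> {..<d})"
    and mom: "\<And>l a m. l \<in> {1..k} \<Longrightarrow> a < d \<Longrightarrow>
        integrable M (\<lambda>\<omega>. X l a \<omega> ^ m) \<and> expectation (\<lambda>\<omega>. X l a \<omega> ^ m) = mo l m"
    and p: "\<And>t l. t < n \<Longrightarrow> l \<in> {1..k} \<Longrightarrow> p t l < d"
  shows "integrable M (\<lambda>\<omega>. \<Prod>l\<in>{1..k}. \<Prod>t<n. X l (p t l) \<omega>) \<and>
     expectation (\<lambda>\<omega>. \<Prod>l\<in>{1..k}. \<Prod>t<n. X l (p t l) \<omega>) =
      (\<Prod>l\<in>{1..k}. \<Prod>y<d. mo l (\<Sum>t<n. if p t l = y then 1 else 0))"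
proof -
  define c where "c l y = (\<Sum>t<n. if p t l = y then 1 else (0::nat))" for l y
  define I where "I = {1..k} \<times> {..<d}"
  define Z where "Z = (\<lambda>i \<omega>. case i of (l, y) \<Rightarrow> X l y \<omega> ^ c l y)"
  have eq: "(\<Prod>l\<in>{1..k}. \<Prod>t<n. X l (p t l) \<omega>) = (\<Prod>i\<in>I. Z i \<omega>)" for \<omega>
  proof -
    have "(\<Prod>l\<in>{1..k}. \<Prod>t<n. X l (p t l) \<omega>) = (\<Prod>l\<in>{1..k}. \<Prod>y<d. X l y \<omega> ^ c l y)"
    proof (rule prod.cong[OF refl])
      fix l assume l: "l \<in> {1..k}"
      show "(\<Prod>t<n. X l (p t l) \<omega>) = (\<Prod>y<d. X l y \<omega> ^ c l y)"
        unfolding c_def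
        by (rule prod_count[of n "\<lambda>t. p t l" d "\<lambda>y. X l y \<omega>"]) (use p l in auto)
    qed
    also have "\<dots> = (\<Prod>i\<in>I. Z i \<omega>)"
      unfolding I_def Z_def by (rule prod.cartesian_product)
    finally show ?thesis .
  qed
  have ind: "indep_vars (\<lambda>_. borel) Z I"
    using indep_vars_compose2[OF indep, of "\<lambda>i x. x ^ (case i of (l, y) \<Rightarrow> c l y)" "\<lambda>_. borel"]
    unfolding Z_def I_def by (simp add: case_prod_unfold)
  have intZ: "\<And>i. i \<in> I \<Longrightarrow> integrable M (Z i)"
    using mom unfolding Z_def I_def by auto
  have "integrable M (\<lambda>\<omega>. \<Prod>i\<in>I. Z i \<omega>)"
    by (rule indep_vars_integrable[OF _ ind intZ]) (auto simp: I_def)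
  moreover have "expectation (\<lambda>\<omega>. \<Prod>i\<in>I. Z i \<omega>) = (\<Prod>i\<in>I. expectation (Z i))"
    by (rule indep_vars_lebesgue_integral[OF _ ind intZ]) (auto simp: I_def)
  moreover have "(\<Prod>i\<in>I. expectation (Z i)) = (\<Prod>l\<in>{1..k}. \<Prod>y<d. mo l (c l y))"
    unfolding I_def prod.cartesian_product Z_def by (intro prod.cong refl) (use mom in auto)
  ultimately show ?thesis unfolding eq c_def by simp
qed



lemma T2eval:
  fixes mo :: "nat \<Rightarrow> real"
  assumes "mo 0 = 1" "mo 1 = 0" "mo 2 = 1" "a < d" "b < (d::nat)"
  shows "(\<Prod>y<d. mo (of_bool (a = y) + of_bool (b = y))) = of_bool (a = b)"
proof -
  have "(\<Prod>y<d. mo (of_bool (a = y) + of_bool (b = y))) = (\<Prod>y\<in>{a,b}. mo (of_bool (a = y) + of_bool (b = y)))"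
    by (rule prod.mono_neutral_right) (use assms in auto)
  moreover have "mo (Suc (Suc 0)) = 1" "mo (Suc 0) = 0" using assms by (simp_all add: numeral_2_eq_2)
  ultimately show ?thesis using assms by (cases "a = b") (auto simp: insert_absorb)
qed

lemma T4eval:
  fixes mo :: "nat \<Rightarrow> real"
  assumes "mo 0 = 1" "mo 1 = 0" "mo 2 = 1" "mo 3 = 0" "mo 4 = (if g then 3 else 1)"
    "a < d" "b < (d::nat)" "c < d" "e < d"
  shows "(\<Prod>y<d. mo (of_bool (a = y) + of_bool (b = y) + of_bool (c = y) + of_bool (e = y))) =
     of_bool (a = b \<and> c = e) + of_bool (a = c \<and> b = e \<and> (g \<or> a \<noteq> b)) + of_bool (a = e \<and> b = c \<and> (g \<or> a \<noteq> b))"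
proof -
  have "(\<Prod>y<d. mo (of_bool (a = y) + of_bool (b = y) + of_bool (c = y) + of_bool (e = y))) =
     (\<Prod>y\<in>{a,b,c,e}. mo (of_bool (a = y) + of_bool (b = y) + of_bool (c = y) + of_bool (e = y)))"
    by (rule prod.mono_neutral_right) (use assms in auto)
  moreover have "mo (Suc (Suc 0)) = 1" "mo (Suc 0) = 0" "mo (Suc (Suc (Suc 0))) = 0"
     "mo (Suc (Suc (Suc (Suc 0)))) = (if g then 3 else 1)" using assms by (simp_all add: numeral_eq_Suc)
  ultimately show ?thesis using assms
    by (cases "a = b"; cases "a = c"; cases "a = e"; cases "b = c"; cases "b = e"; cases "c = e") (auto simp: insert_absorb)
qed



lemma midx_iff: "i \<in> midx K d \<longleftrightarrow> (\<forall>l\<in>K. i l < d) \<and> (\<forall>l. l \<notin> K \<longrightarrow> i l = undefined)"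
  by (auto simp: midx_def PiE_iff extensional_def)

lemma midx_ext: "i \<in> midx K d \<Longrightarrow> j \<in> midx K d \<Longrightarrow> (\<forall>l\<in>K. i l = j l) \<Longrightarrow> i = j"
  unfolding midx_iff fun_eq_iff by metis

lemma finite_midx[simp, intro]: "finite K \<Longrightarrow> finite (midx K d)"
  by (auto simp: midx_def intro!: finite_PiE)

lemma glue_midx: "a \<in> midx K d \<Longrightarrow> s \<in> midx S d \<Longrightarrow> glue S a s \<in> midx (K \<union> S) d"
  by (auto simp: midx_iff glue_def)

lemma glue_midx': "a \<in> midx K d \<Longrightarrow> s \<in> midx K d \<Longrightarrow> S \<subseteq> K \<Longrightarrow> glue S a s \<in> midx K d"
  by (auto simp: midx_iff glue_def)

lemma glue_bij:
  assumes "K \<inter> S = {}"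
  shows "bij_betw (\<lambda>(a, s). glue S a s) (midx K d \<times> midx S d) (midx (K \<union> S) d)"
proof (rule bij_betwI[where g = "\<lambda>i. (restrict i K, restrict i S)"])
  show "(\<lambda>(a, s). glue S a s) \<in> midx K d \<times> midx S d \<rightarrow> midx (K \<union> S) d"
    by (auto intro: glue_midx)
  show "(\<lambda>i. (restrict i K, restrict i S)) \<in> midx (K \<union> S) d \<rightarrow> midx K d \<times> midx S d"
    by (auto simp: midx_iff)
qed (use assms in \<open>auto simp: midx_iff glue_def fun_eq_iff\<close>)

lemma sum_glue:
  assumes "K \<inter> S = {}"
  shows "(\<Sum>i\<in>midx (K \<union> S) d. F i) = (\<Sum>a\<in>midx K d. \<Sum>s\<in>midx S d. F (glue S a s))"
  using sum.reindex_bij_betw[OF glue_bij[OF assms, of d], of F]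
  by (simp add: sum.cartesian_product case_prod_unfold)

lemma prod_of_bool: "finite F \<Longrightarrow> (\<Prod>l\<in>F. of_bool (P l) :: real) = of_bool (\<forall>l\<in>F. P l)"
  by (induction F rule: finite_induct) auto

definition "Dt l i j i' j' = (of_bool (i l = j l \<and> i' l = j' l) :: real)"
definition "Ut g l i j i' j' = (of_bool (i l = i' l \<and> j l = j' l \<and> (g l \<or> i l \<noteq> j l)) :: real)"
definition "Wt g l i j i' j' = (of_bool (i l = j' l \<and> j l = i' l \<and> (g l \<or> i l \<noteq> j l)) :: real)"
definition "mk g K a b = (\<Prod>l\<in>K. of_bool (g l \<or> a l \<noteq> b l) :: real)"

lemma Peval:
  assumes KS: "K \<inter> S = {}" and VK: "V \<subseteq> K" and fin: "finite K" "finite S"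
    and mK: "a \<in> midx K d" "b \<in> midx K d" "a' \<in> midx K d" "b' \<in> midx K d"
    and mS: "s \<in> midx S d" "t \<in> midx S d" "s' \<in> midx S d" "t' \<in> midx S d"
  shows "(\<Prod>l\<in>S. Dt l (glue S a s) (glue S b t) (glue S a' s') (glue S b' t')) *
     ((\<Prod>l\<in>V. Wt g l (glue S a s) (glue S b t) (glue S a' s') (glue S b' t')) *
      (\<Prod>l\<in>K - V. Ut g l (glue S a s) (glue S b t) (glue S a' s') (glue S b' t'))) =
     (if t' = s' then if b' = glue V b a then if a' = glue V a b then if t = s then mk g K a b else 0 else 0 else 0 else 0)"
proof -
  have p1: "(\<Prod>l\<in>S. Dt l (glue S a s) (glue S b t) (glue S a' s') (glue S b' t')) = of_bool (s = t \<and> s' = t')"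
  proof -
    have "(\<Prod>l\<in>S. Dt l (glue S a s) (glue S b t) (glue S a' s') (glue S b' t')) =
        of_bool (\<forall>l\<in>S. s l = t l \<and> s' l = t' l)"
      unfolding Dt_def glue_def by (simp add: prod_of_bool fin)
    also have "(\<forall>l\<in>S. s l = t l \<and> s' l = t' l) \<longleftrightarrow> s = t \<and> s' = t'"
      using midx_ext[OF mS(1,2)] midx_ext[OF mS(3,4)] by auto
    finally show ?thesis .
  qed
  define h where "h l = (if l \<in> V then Wt g l (glue S a s) (glue S b t) (glue S a' s') (glue S b' t')
     else Ut g l (glue S a s) (glue S b t) (glue S a' s') (glue S b' t'))" for l
  have "(\<Prod>l\<in>V. Wt g l (glue S a s) (glue S b t) (glue S a' s') (glue S b' t')) *
      (\<Prod>l\<in>K - V. Ut g l (glue S a s) (glue S b t) (glue S a' s') (glue S b' t')) = (\<Prod>l\<in>K. h l)"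
  proof -
    have "(\<Prod>l\<in>K. h l) = (\<Prod>l\<in>K - V. h l) * (\<Prod>l\<in>V. h l)"
      using prod.subset_diff[OF VK fin(1)] by simp
    then show ?thesis unfolding h_def by (simp add: mult.commute)
  qed
  also have "\<dots> = (\<Prod>l\<in>K. of_bool (a' l = glue V a b l \<and> b' l = glue V b a l) * of_bool (g l \<or> a l \<noteq> b l))"
  proof (rule prod.cong[OF refl])
    fix l assume l: "l \<in> K"
    then have "l \<notin> S" using KS by auto
    then show "h l = of_bool (a' l = glue V a b l \<and> b' l = glue V b a l) * of_bool (g l \<or> a l \<noteq> b l)"
    proof (cases "l \<in> V")
      case True
      have "(a l = b' l \<and> b l = a' l \<and> (g l \<or> a l \<noteq> b l)) = ((a' l = b l \<and> b' l = a l) \<and> (g l \<or> a l \<noteq> b l))" by auto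
      then show ?thesis using True \<open>l \<notin> S\<close> unfolding h_def Wt_def glue_def of_bool_conj by simp
    next
      case False
      have "(a l = a' l \<and> b l = b' l \<and> (g l \<or> a l \<noteq> b l)) = ((a' l = a l \<and> b' l = b l) \<and> (g l \<or> a l \<noteq> b l))" by auto
      then show ?thesis using False \<open>l \<notin> S\<close> unfolding h_def Ut_def glue_def of_bool_conj by simp
    qed
  qed
  also have "\<dots> = of_bool (\<forall>l\<in>K. a' l = glue V a b l \<and> b' l = glue V b a l) * mk g K a b"
    unfolding prod.distrib mk_def by (simp add: prod_of_bool fin)
  also have "(\<forall>l\<in>K. a' l = glue V a b l \<and> b' l = glue V b a l) \<longleftrightarrow> a' = glue V a b \<and> b' = glue V b a"
    using midx_ext[OF mK(3) glue_midx'[OF mK(1,2) VK]] midx_ext[OF mK(4) glue_midx'[OF mK(2,1) VK]] by auto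
  finally have X: "(\<Prod>l\<in>V. Wt g l (glue S a s) (glue S b t) (glue S a' s') (glue S b' t')) *
      (\<Prod>l\<in>K - V. Ut g l (glue S a s) (glue S b t) (glue S a' s') (glue S b' t')) = 
      of_bool (a' = glue V a b \<and> b' = glue V b a) * mk g K a b" .
  show ?thesis unfolding p1 X by (cases "t' = s'"; cases "b' = glue V b a"; cases "a' = glue V a b"; cases "t = s") auto
qed




lemma sum_if_const: "(\<Sum>x\<in>T. if P then f x else 0) = (if P then sum f T else (0::real))"
  by auto

lemma Heval:
  assumes KS: "K \<inter> S = {}" and VK: "V \<subseteq> K" and fin: "finite K" "finite S"
  shows "(\<Sum>i\<in>midx (K \<union> S) d. \<Sum>j\<in>midx (K \<union> S) d. \<Sum>i'\<in>midx (K \<union> S) d. \<Sum>j'\<in>midx (K \<union> S) d.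
      A i j * A i' j' * ((\<Prod>l\<in>S. Dt l i j i' j') * ((\<Prod>l\<in>V. Wt g l i j i' j') * (\<Prod>l\<in>K - V. Ut g l i j i' j'))))
   = (\<Sum>a\<in>midx K d. \<Sum>b\<in>midx K d. mk g K a b * ptrace d S A a b * ptrace d S A (glue V a b) (glue V b a))"
  (is "?L = ?R")
proof -
  have "?L = (\<Sum>a\<in>midx K d. \<Sum>s\<in>midx S d. \<Sum>b\<in>midx K d. \<Sum>t\<in>midx S d.
      \<Sum>a'\<in>midx K d. \<Sum>s'\<in>midx S d. \<Sum>b'\<in>midx K d. \<Sum>t'\<in>midx S d.
      A (glue S a s) (glue S b t) * A (glue S a' s') (glue S b' t') *
        ((\<Prod>l\<in>S. Dt l (glue S a s) (glue S b t) (glue S a' s') (glue S b' t')) *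
         ((\<Prod>l\<in>V. Wt g l (glue S a s) (glue S b t) (glue S a' s') (glue S b' t')) *
          (\<Prod>l\<in>K - V. Ut g l (glue S a s) (glue S b t) (glue S a' s') (glue S b' t')))))"
    by (simp only: sum_glue[OF KS])
  also have "\<dots> = (\<Sum>a\<in>midx K d. \<Sum>s\<in>midx S d. \<Sum>b\<in>midx K d. \<Sum>t\<in>midx S d.
      \<Sum>a'\<in>midx K d. \<Sum>s'\<in>midx S d. \<Sum>b'\<in>midx K d. \<Sum>t'\<in>midx S d.
      (if t' = s' then if b' = glue V b a then if a' = glue V a b then if t = s then
         A (glue S a s) (glue S b t) * A (glue S a' s') (glue S b' t') * mk g K a b
       else 0 else 0 else 0 else 0))"
    by (intro sum.cong refl) (simp add: Peval[OF KS VK fin])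
  also have "\<dots> = (\<Sum>a\<in>midx K d. \<Sum>s\<in>midx S d. \<Sum>b\<in>midx K d. \<Sum>s'\<in>midx S d.
      A (glue S a s) (glue S b s) * A (glue S (glue V a b) s') (glue S (glue V b a) s') * mk g K a b)"
    using VK fin by (simp add: sum_if_const glue_midx')
  also have "\<dots> = (\<Sum>a\<in>midx K d. \<Sum>b\<in>midx K d. \<Sum>s\<in>midx S d. \<Sum>s'\<in>midx S d.
      A (glue S a s) (glue S b s) * A (glue S (glue V a b) s') (glue S (glue V b a) s') * mk g K a b)"
    by (rule sum.cong[OF refl], rule sum.swap)
  also have "\<dots> = ?R"
    unfolding ptrace_def by (simp add: sum_distrib_left sum_distrib_right mult_ac)
  finally show ?thesis .
qed




lemma glue_invol: "glue V (glue V a b) (glue V b a) = a"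
  by (auto simp: glue_def fun_eq_iff)

lemma frob_transp:
  assumes "V \<subseteq> K" "finite K"
  shows "(\<Sum>a\<in>midx K d. \<Sum>b\<in>midx K d. (B (glue V a b) (glue V b a))\<^sup>2) = frob2 K d B"
proof -
  let ?h = "\<lambda>(a, b). (glue V a b, glue V b a)"
  have bij: "bij_betw ?h (midx K d \<times> midx K d) (midx K d \<times> midx K d)"
    by (rule bij_betwI[where g = ?h]) (use assms in \<open>auto simp: glue_midx' glue_invol\<close>)
  have "(\<Sum>a\<in>midx K d. \<Sum>b\<in>midx K d. (B (glue V a b) (glue V b a))\<^sup>2) =
      (\<Sum>x\<in>midx K d \<times> midx K d. (\<lambda>(a, b). (B a b)\<^sup>2) (?h x))"
    by (simp add: sum.cartesian_product case_prod_unfold)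
  also have "\<dots> = (\<Sum>x\<in>midx K d \<times> midx K d. (\<lambda>(a, b). (B a b)\<^sup>2) x)"
    by (rule sum.reindex_bij_betw[OF bij])
  also have "\<dots> = frob2 K d B"
    by (simp add: frob2_def sum.cartesian_product case_prod_unfold)
  finally show ?thesis .
qed

lemma mk_01: "finite K \<Longrightarrow> mk g K a b = 0 \<or> mk g K a b = 1"
  using prod_of_bool[of K "\<lambda>l. g l \<or> a l \<noteq> b l"] unfolding mk_def by (cases "\<forall>l\<in>K. g l \<or> a l \<noteq> b l") simp_all

lemma Hbound:
  assumes "V \<subseteq> K" "finite K"
  shows "(\<Sum>a\<in>midx K d. \<Sum>b\<in>midx K d. mk g K a b * B a b * B (glue V a b) (glue V b a)) \<le> frob2 K d B"
proof -
  have "(\<Sum>a\<in>midx K d. \<Sum>b\<in>midx K d. mk g K a b * B a b * B (glue V a b) (glue V b a)) \<le>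
     (\<Sum>a\<in>midx K d. \<Sum>b\<in>midx K d. ((B a b)\<^sup>2 + (B (glue V a b) (glue V b a))\<^sup>2) / 2)"
  proof (intro sum_mono)
    fix a b
    have sq: "0 \<le> (B a b - B (glue V a b) (glue V b a))\<^sup>2" by simp
    show "mk g K a b * B a b * B (glue V a b) (glue V b a) \<le> ((B a b)\<^sup>2 + (B (glue V a b) (glue V b a))\<^sup>2) / 2"
      using mk_01[OF assms(2), of g a b] sq
      by (auto simp: power2_eq_square algebra_simps)
  qed
  also have "\<dots> = (frob2 K d B + frob2 K d B) / 2"
    unfolding add_divide_distrib sum.distrib frob_transp[OF assms] sum_divide_distrib[symmetric]
    by (simp add: frob2_def)
  finally show ?thesis by simp
qed

lemma Heq:
  assumes "V \<subseteq> K" "finite K" "\<forall>l\<in>K. g l"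
    and inv: "\<And>a b. a \<in> midx K d \<Longrightarrow> b \<in> midx K d \<Longrightarrow> B (glue V a b) (glue V b a) = B a b"
  shows "(\<Sum>a\<in>midx K d. \<Sum>b\<in>midx K d. mk g K a b * B a b * B (glue V a b) (glue V b a)) = frob2 K d B"
  unfolding frob2_def using assms by (intro sum.cong refl) (simp add: mk_def power2_eq_square)

lemma glue_sym: "glue W (glue V i j) (glue V j i) = glue ((W - V) \<union> (V - W)) i j"
  by (auto simp: glue_def fun_eq_iff)

lemma abar_inv:
  assumes "V \<subseteq> {1..k}"
  shows "abar k A (glue V i j) (glue V j i) = abar k A i j"
proof -
  let ?h = "\<lambda>W. (W - V) \<union> (V - W)"
  have bij: "bij_betw ?h (Pow {1..k}) (Pow {1..k})"
    by (rule bij_betwI[where g = ?h]) (use assms in auto)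
  have "(\<Sum>W\<in>Pow {1..k}. ptransp W A (glue V i j) (glue V j i)) =
      (\<Sum>W\<in>Pow {1..k}. (\<lambda>W. A (glue W i j) (glue W j i)) (?h W))"
    by (simp add: ptransp_def glue_sym Un_commute)
  also have "\<dots> = (\<Sum>W\<in>Pow {1..k}. A (glue W i j) (glue W j i))"
    by (rule sum.reindex_bij_betw[OF bij])
  finally show ?thesis by (simp add: abar_def ptransp_def)
qed

lemma A_inv:
  assumes hyp: "\<forall>i\<in>midx {1..k} d. \<forall>j\<in>midx {1..k} d. A i j = abar k A i j"
    and V: "V \<subseteq> {1..k}" and ij: "i \<in> midx {1..k} d" "j \<in> midx {1..k} d"
  shows "A (glue V i j) (glue V j i) = A i j"
proof -
  have "glue V i j \<in> midx {1..k} d" "glue V j i \<in> midx {1..k} d"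
    using V ij by (auto intro: glue_midx')
  then have "A (glue V i j) (glue V j i) = abar k A (glue V i j) (glue V j i)" using hyp by auto
  also have "\<dots> = abar k A i j" by (rule abar_inv[OF V])
  also have "\<dots> = A i j" using hyp ij by auto
  finally show ?thesis .
qed

lemma B_inv:
  assumes hyp: "\<forall>i\<in>midx {1..k} d. \<forall>j\<in>midx {1..k} d. A i j = abar k A i j"
    and S: "S \<subseteq> {1..k}" and V: "V \<subseteq> {1..k} - S"
    and ab: "a \<in> midx ({1..k} - S) d" "b \<in> midx ({1..k} - S) d"
  shows "ptrace d S A (glue V a b) (glue V b a) = ptrace d S A a b"
  unfolding ptrace_def
proof (rule sum.cong[OF refl])
  fix s assume s: "s \<in> midx S d"
  have U: "{1..k} = ({1..k} - S) \<union> S" using S by auto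
  have m: "glue S a s \<in> midx {1..k} d" "glue S b s \<in> midx {1..k} d"
    using glue_midx[OF ab(1) s] glue_midx[OF ab(2) s] U by auto
  have e: "glue S (glue V a b) s = glue V (glue S a s) (glue S b s)" "glue S (glue V b a) s = glue V (glue S b s) (glue S a s)"
    using V by (auto simp: glue_def fun_eq_iff)
  show "A (glue S (glue V a b) s) (glue S (glue V b a) s) = A (glue S a s) (glue S b s)"
    unfolding e using A_inv[OF hyp _ m] V by auto
qed



lemma swap4: "(\<Sum>i\<in>A. \<Sum>j\<in>B. \<Sum>i'\<in>C. \<Sum>j'\<in>D. \<Sum>x\<in>E. f i j i' j' x) =
   (\<Sum>x\<in>E. \<Sum>i\<in>A. \<Sum>j\<in>B. \<Sum>i'\<in>C. \<Sum>j'\<in>D. f i j i' j' x :: real)"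
proof -
  have "(\<Sum>i\<in>A. \<Sum>j\<in>B. \<Sum>i'\<in>C. \<Sum>j'\<in>D. \<Sum>x\<in>E. f i j i' j' x) =
     (\<Sum>i\<in>A. \<Sum>j\<in>B. \<Sum>i'\<in>C. \<Sum>x\<in>E. \<Sum>j'\<in>D. f i j i' j' x)"
    by (rule sum.cong[OF refl], rule sum.cong[OF refl], rule sum.cong[OF refl], rule sum.swap)
  also have "\<dots> = (\<Sum>i\<in>A. \<Sum>j\<in>B. \<Sum>x\<in>E. \<Sum>i'\<in>C. \<Sum>j'\<in>D. f i j i' j' x)"
    by (rule sum.cong[OF refl], rule sum.cong[OF refl], rule sum.swap)
  also have "\<dots> = (\<Sum>i\<in>A. \<Sum>x\<in>E. \<Sum>j\<in>B. \<Sum>i'\<in>C. \<Sum>j'\<in>D. f i j i' j' x)"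
    by (rule sum.cong[OF refl], rule sum.swap)
  also have "\<dots> = (\<Sum>x\<in>E. \<Sum>i\<in>A. \<Sum>j\<in>B. \<Sum>i'\<in>C. \<Sum>j'\<in>D. f i j i' j' x)"
    by (rule sum.swap)
  finally show ?thesis .
qed

definition "Hterm d g U S V A = (\<Sum>a\<in>midx (U - S) d. \<Sum>b\<in>midx (U - S) d.
    mk g (U - S) a b * ptrace d S A a b * ptrace d S A (glue V a b) (glue V b a))"

lemma var_decomp:
  fixes A :: tmat and k d :: nat and g :: "nat \<Rightarrow> bool"
  defines "U \<equiv> {1..k}"
  defines "EQm \<equiv> (\<Sum>i\<in>midx U d. \<Sum>j\<in>midx U d. A i j * (\<Prod>l\<in>U. of_bool (i l = j l)))"
  defines "EQsq \<equiv> (\<Sum>i\<in>midx U d. \<Sum>j\<in>midx U d. \<Sum>i'\<in>midx U d. \<Sum>j'\<in>midx U d.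
      A i j * A i' j' * (\<Prod>l\<in>U. Dt l i j i' j' + Ut g l i j i' j' + Wt g l i j i' j'))"
  shows "EQsq - EQm\<^sup>2 = (\<Sum>S | S \<subset> U. \<Sum>V\<in>Pow (U - S). Hterm d g U S V A)"
proof -
  have finU: "finite U" unfolding U_def by simp
  define F where "F S V = (\<Sum>i\<in>midx U d. \<Sum>j\<in>midx U d. \<Sum>i'\<in>midx U d. \<Sum>j'\<in>midx U d.
      A i j * A i' j' * ((\<Prod>l\<in>S. Dt l i j i' j') * ((\<Prod>l\<in>V. Wt g l i j i' j') * (\<Prod>l\<in>(U - S) - V. Ut g l i j i' j'))))" for S V
  have EQsq: "EQsq = (\<Sum>S\<in>Pow U. \<Sum>V\<in>Pow (U - S). F S V)"
  proof -
    have "EQsq = (\<Sum>i\<in>midx U d. \<Sum>j\<in>midx U d. \<Sum>i'\<in>midx U d. \<Sum>j'\<in>midx U d. \<Sum>S\<in>Pow U. \<Sum>V\<in>Pow (U - S).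
      A i j * A i' j' * ((\<Prod>l\<in>S. Dt l i j i' j') * ((\<Prod>l\<in>V. Wt g l i j i' j') * (\<Prod>l\<in>(U - S) - V. Ut g l i j i' j'))))"
      unfolding EQsq_def
    proof (intro sum.cong refl)
      fix i j i' j' :: mindex
      have "(\<Prod>l\<in>U. Dt l i j i' j' + Ut g l i j i' j' + Wt g l i j i' j') =
          (\<Prod>l\<in>U. Dt l i j i' j' + (Wt g l i j i' j' + Ut g l i j i' j'))"
        by (simp add: add_ac)
      also have "\<dots> = (\<Sum>S\<in>Pow U. (\<Prod>l\<in>S. Dt l i j i' j') * (\<Prod>l\<in>U - S. Wt g l i j i' j' + Ut g l i j i' j'))"
        by (rule prod_add[OF finU])
      also have "\<dots> = (\<Sum>S\<in>Pow U. (\<Prod>l\<in>S. Dt l i j i' j') * (\<Sum>V\<in>Pow (U - S). (\<Prod>l\<in>V. Wt g l i j i' j') * (\<Prod>l\<in>(U - S) - V. Ut g l i j i' j')))"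
        using finU by (intro sum.cong refl) (simp add: prod_add)
      finally show "A i j * A i' j' * (\<Prod>l\<in>U. Dt l i j i' j' + Ut g l i j i' j' + Wt g l i j i' j') =
        (\<Sum>S\<in>Pow U. \<Sum>V\<in>Pow (U - S). A i j * A i' j' * ((\<Prod>l\<in>S. Dt l i j i' j') * ((\<Prod>l\<in>V. Wt g l i j i' j') * (\<Prod>l\<in>(U - S) - V. Ut g l i j i' j'))))"
        by (simp add: sum_distrib_left)
    qed
    also have "\<dots> = (\<Sum>S\<in>Pow U. \<Sum>i\<in>midx U d. \<Sum>j\<in>midx U d. \<Sum>i'\<in>midx U d. \<Sum>j'\<in>midx U d. \<Sum>V\<in>Pow (U - S).
      A i j * A i' j' * ((\<Prod>l\<in>S. Dt l i j i' j') * ((\<Prod>l\<in>V. Wt g l i j i' j') * (\<Prod>l\<in>(U - S) - V. Ut g l i j i' j'))))"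
      by (rule swap4)
    also have "\<dots> = (\<Sum>S\<in>Pow U. \<Sum>V\<in>Pow (U - S). F S V)"
      unfolding F_def by (rule sum.cong[OF refl], rule swap4)
    finally show ?thesis .
  qed
  have FU: "F U {} = EQm\<^sup>2"
  proof -
    have "EQm\<^sup>2 = (\<Sum>i\<in>midx U d. \<Sum>i'\<in>midx U d. \<Sum>j\<in>midx U d. \<Sum>j'\<in>midx U d.
       (A i j * (\<Prod>l\<in>U. of_bool (i l = j l))) * (A i' j' * (\<Prod>l\<in>U. of_bool (i' l = j' l))))"
      unfolding EQm_def power2_eq_square sum_product ..
    also have "\<dots> = (\<Sum>i\<in>midx U d. \<Sum>j\<in>midx U d. \<Sum>i'\<in>midx U d. \<Sum>j'\<in>midx U d.
       (A i j * (\<Prod>l\<in>U. of_bool (i l = j l))) * (A i' j' * (\<Prod>l\<in>U. of_bool (i' l = j' l))))"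
      by (rule sum.cong[OF refl], rule sum.swap)
    also have "\<dots> = F U {}"
      unfolding F_def Dt_def of_bool_conj prod.distrib by (intro sum.cong refl) (simp add: mult_ac)
    finally show ?thesis by simp
  qed
  have Fterm: "(\<Sum>V\<in>Pow (U - S). F S V) = (\<Sum>V\<in>Pow (U - S). Hterm d g U S V A)" if "S \<subseteq> U" for S
  proof (rule sum.cong[OF refl])
    fix V assume "V \<in> Pow (U - S)"
    then have V: "V \<subseteq> U - S" by auto
    have fS: "finite S" using that finU finite_subset by auto
    have U': "U = (U - S) \<union> S" using that by auto
    show "F S V = Hterm d g U S V A"
      unfolding F_def Hterm_def
      by (subst (1 2 3 4) U') (rule Heval[OF _ V _ fS], auto simp: finU)
  qed
  have "EQsq = (\<Sum>V\<in>Pow (U - U). F U V) + (\<Sum>S\<in>Pow U - {U}. \<Sum>V\<in>Pow (U - S). F S V)"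
    unfolding EQsq using finU by (subst sum.remove[of _ U]) auto
  also have "(\<Sum>V\<in>Pow (U - U). F U V) = EQm\<^sup>2" using FU by simp
  also have "Pow U - {U} = {S. S \<subset> U}" by auto
  finally have "EQsq - EQm\<^sup>2 = (\<Sum>S | S \<subset> U. \<Sum>V\<in>Pow (U - S). F S V)" by simp
  also have "\<dots> = (\<Sum>S | S \<subset> U. \<Sum>V\<in>Pow (U - S). Hterm d g U S V A)"
    by (rule sum.cong[OF refl]) (rule Fterm, auto)
  finally show ?thesis .
qed



lemma card_U_S: "S \<subset> {1..k} \<Longrightarrow> card ({1..k} - S) = k - card S"
  by (subst card_Diff_subset) (auto intro: finite_subset)

lemma alg_bound:
  fixes A :: tmat and k d :: nat and g :: "nat \<Rightarrow> bool"
  shows "(\<Sum>S | S \<subset> {1..k}. \<Sum>V\<in>Pow ({1..k} - S). Hterm d g {1..k} S V A)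
     \<le> (\<Sum>S | S \<subset> {1..k}. 2 ^ (k - card S) * frob2 ({1..k} - S) d (ptrace d S A))"
proof (rule sum_mono)
  fix S assume "S \<in> {S. S \<subset> {1..k}}"
  then have S: "S \<subset> {1..k}" by auto
  have "(\<Sum>V\<in>Pow ({1..k} - S). Hterm d g {1..k} S V A) \<le> (\<Sum>V\<in>Pow ({1..k} - S). frob2 ({1..k} - S) d (ptrace d S A))"
    unfolding Hterm_def by (rule sum_mono, rule Hbound) auto
  also have "\<dots> = 2 ^ (k - card S) * frob2 ({1..k} - S) d (ptrace d S A)"
    using card_U_S[OF S] by (simp add: card_Pow)
  finally show "(\<Sum>V\<in>Pow ({1..k} - S). Hterm d g {1..k} S V A) \<le> 2 ^ (k - card S) * frob2 ({1..k} - S) d (ptrace d S A)" .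
qed

lemma alg_eq:
  fixes A :: tmat and k d :: nat and g :: "nat \<Rightarrow> bool"
  assumes g: "\<forall>l\<in>{1..k}. g l"
    and hyp: "\<forall>i\<in>midx {1..k} d. \<forall>j\<in>midx {1..k} d. A i j = abar k A i j"
  shows "(\<Sum>S | S \<subset> {1..k}. \<Sum>V\<in>Pow ({1..k} - S). Hterm d g {1..k} S V A)
     = (\<Sum>S | S \<subset> {1..k}. 2 ^ (k - card S) * frob2 ({1..k} - S) d (ptrace d S A))"
proof (rule sum.cong[OF refl])
  fix S assume "S \<in> {S. S \<subset> {1..k}}"
  then have S: "S \<subset> {1..k}" by auto
  have "(\<Sum>V\<in>Pow ({1..k} - S). Hterm d g {1..k} S V A) = (\<Sum>V\<in>Pow ({1..k} - S). frob2 ({1..k} - S) d (ptrace d S A))"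
    unfolding Hterm_def
  proof (rule sum.cong[OF refl], rule Heq)
    fix V assume "V \<in> Pow ({1..k} - S)"
    then have V: "V \<subseteq> {1..k} - S" by auto
    show "V \<subseteq> {1..k} - S" by fact
    show "finite ({1..k} - S)" by simp
    show "\<forall>l\<in>{1..k} - S. g l" using g by auto
    show "ptrace d S A (glue V a b) (glue V b a) = ptrace d S A a b"
      if "a \<in> midx ({1..k} - S) d" "b \<in> midx ({1..k} - S) d" for a b
      using B_inv[OF hyp _ V that] S by auto
  qed
  also have "\<dots> = 2 ^ (k - card S) * frob2 ({1..k} - S) d (ptrace d S A)"
    using card_U_S[OF S] by (simp add: card_Pow)
  finally show "(\<Sum>V\<in>Pow ({1..k} - S). Hterm d g {1..k} S V A) = 2 ^ (k - card S) * frob2 ({1..k} - S) d (ptrace d S A)" .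
qed



lemma cnt2: "(\<Sum>t<2. if ([i,j] ! t) l = (y::nat) then 1 else 0) = (of_bool (i l = y) + of_bool (j l = y) :: nat)"
  by (simp add: eval_nat_numeral)
lemma cnt4: "(\<Sum>t<4. if ([i,j,i',j'] ! t) l = (y::nat) then 1 else 0) = (of_bool (i l = y) + of_bool (j l = y) + of_bool (i' l = y) + of_bool (j' l = y) :: nat)"
  by (simp add: eval_nat_numeral)
lemma pr2: "(\<Prod>t<2. f t :: real) = f 0 * f (Suc 0)"
  by (simp add: eval_nat_numeral mult_ac)
lemma pr4: "(\<Prod>t<4. f t :: real) = f 0 * f (Suc 0) * f (Suc (Suc 0)) * f (Suc (Suc (Suc 0)))"
  by (simp add: eval_nat_numeral mult_ac)
lemma lt2: "t < 2 \<Longrightarrow> i \<in> I \<Longrightarrow> j \<in> I \<Longrightarrow> [i,j] ! t \<in> I"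
  by (cases t) (auto simp: nth_Cons')
lemma lt4: "t < 4 \<Longrightarrow> i \<in> I \<Longrightarrow> j \<in> I \<Longrightarrow> i' \<in> I \<Longrightarrow> j' \<in> I \<Longrightarrow> [i,j,i',j'] ! t \<in> I"
  by (auto simp: nth_Cons' eval_nat_numeral less_Suc_eq)

lemma (in prob_space) Q_moments:
  fixes X :: "nat \<Rightarrow> nat \<Rightarrow> 'a \<Rightarrow> real" and d k :: nat and A :: tmat and gauss :: "nat \<Rightarrow> bool"
  assumes indep: "indep_vars (\<lambda>_. borel) (\<lambda>(l, a). X l a) ({1..k} \<times> {..<d})"
    and gaussian: "\<And>l a. l \<in> {1..k} \<Longrightarrow> a < d \<Longrightarrow> gauss l \<Longrightarrow>
                      distributed M lborel (X l a) std_normal_density"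
    and rademacher: "\<And>l a. l \<in> {1..k} \<Longrightarrow> a < d \<Longrightarrow> \<not> gauss l \<Longrightarrow> rademacher_rv M (X l a)"
  shows "integrable M (qform d k A X) \<and> integrable M (\<lambda>\<omega>. (qform d k A X \<omega>)\<^sup>2)
    \<and> expectation (qform d k A X) = (\<Sum>i\<in>midx {1..k} d. \<Sum>j\<in>midx {1..k} d. A i j * (\<Prod>l\<in>{1..k}. of_bool (i l = j l)))
    \<and> expectation (\<lambda>\<omega>. (qform d k A X \<omega>)\<^sup>2) = (\<Sum>i\<in>midx {1..k} d. \<Sum>j\<in>midx {1..k} d. \<Sum>i'\<in>midx {1..k} d. \<Sum>j'\<in>midx {1..k} d.
      A i j * A i' j' * (\<Prod>l\<in>{1..k}. Dt l i j i' j' + Ut gauss l i j i' j' + Wt gauss l i j i' j'))"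
proof -
  define mo where "mo l m = (if gauss l then gm m else rm m)" for l m
  have mom: "integrable M (\<lambda>\<omega>. X l a \<omega> ^ m) \<and> expectation (\<lambda>\<omega>. X l a \<omega> ^ m) = mo l m"
    if "l \<in> {1..k}" "a < d" for l a m
    using mom_gauss[OF gaussian[OF that]] mom_rad[OF rademacher[OF that]] unfolding mo_def
    by (cases "gauss l") auto
  have mv: "mo l 0 = 1" "mo l 1 = 0" "mo l 2 = 1" "mo l 3 = 0" "mo l 4 = (if gauss l then 3 else 1)" for l
    by (simp_all add: mo_def gm_def rm_def fact_numeral)
  let ?I = "midx {1..k} d"
  have inI: "i l < d" if "i \<in> ?I" "l \<in> {1..k}" for i l
    using that by (auto simp: midx_iff)
  define P2 where "P2 i j \<omega> = (\<Prod>l\<in>{1..k}. \<Prod>t<2. X l (([i,j] ! t) l) \<omega>)" for i j \<omega>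
  define P4 where "P4 i j i' j' \<omega> = (\<Prod>l\<in>{1..k}. \<Prod>t<4. X l (([i,j,i',j'] ! t) l) \<omega>)" for i j i' j' \<omega>
  have E2: "integrable M (P2 i j) \<and> expectation (P2 i j) = (\<Prod>l\<in>{1..k}. of_bool (i l = j l))"
    if "i \<in> ?I" "j \<in> ?I" for i j
  proof -
    have pe: "integrable M (P2 i j) \<and> expectation (P2 i j) =
       (\<Prod>l\<in>{1..k}. \<Prod>y<d. mo l (\<Sum>t<2. if ([i,j] ! t) l = y then 1 else 0))"
      unfolding P2_def
      by (rule prod_expect[OF indep mom]) (use inI[OF lt2[OF _ that]] in auto)
    have "(\<Prod>y<d. mo l (\<Sum>t<2. if ([i,j] ! t) l = y then 1 else 0)) = of_bool (i l = j l)" if "l \<in> {1..k}" for l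
      unfolding cnt2 by (rule T2eval) (use mv inI \<open>i \<in> ?I\<close> \<open>j \<in> ?I\<close> that in auto)
    then show ?thesis using pe by simp
  qed
  have E4: "integrable M (P4 i j i' j') \<and> expectation (P4 i j i' j') =
      (\<Prod>l\<in>{1..k}. Dt l i j i' j' + Ut gauss l i j i' j' + Wt gauss l i j i' j')"
    if "i \<in> ?I" "j \<in> ?I" "i' \<in> ?I" "j' \<in> ?I" for i j i' j'
  proof -
    have pe: "integrable M (P4 i j i' j') \<and> expectation (P4 i j i' j') =
       (\<Prod>l\<in>{1..k}. \<Prod>y<d. mo l (\<Sum>t<4. if ([i,j,i',j'] ! t) l = y then 1 else 0))"
      unfolding P4_def
      by (rule prod_expect[OF indep mom]) (use inI[OF lt4[OF _ that]] in auto)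
    have "(\<Prod>y<d. mo l (\<Sum>t<4. if ([i,j,i',j'] ! t) l = y then 1 else 0)) = Dt l i j i' j' + Ut gauss l i j i' j' + Wt gauss l i j i' j'"
      if "l \<in> {1..k}" for l
      unfolding cnt4 Dt_def Ut_def Wt_def by (rule T4eval) (use mv inI \<open>i \<in> ?I\<close> \<open>j \<in> ?I\<close> \<open>i' \<in> ?I\<close> \<open>j' \<in> ?I\<close> that in auto)
    then show ?thesis using pe by simp
  qed
  have Qe: "qform d k A X \<omega> = (\<Sum>i\<in>?I. \<Sum>j\<in>?I. A i j * P2 i j \<omega>)" for \<omega>
    unfolding qform_def P2_def tensvec_def pr2 prod.distrib by (simp add: mult_ac)
  have Q2e: "(qform d k A X \<omega>)\<^sup>2 = (\<Sum>i\<in>?I. \<Sum>j\<in>?I. \<Sum>i'\<in>?I. \<Sum>j'\<in>?I. A i j * A i' j' * P4 i j i' j' \<omega>)" for \<omega>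
  proof -
    have "(qform d k A X \<omega>)\<^sup>2 = (\<Sum>i\<in>?I. \<Sum>j\<in>?I. \<Sum>i'\<in>?I. \<Sum>j'\<in>?I. (A i j * P2 i j \<omega>) * (A i' j' * P2 i' j' \<omega>))"
      unfolding Qe power2_eq_square sum_product by (rule sum.cong[OF refl], rule sum.swap)
    also have "\<dots> = (\<Sum>i\<in>?I. \<Sum>j\<in>?I. \<Sum>i'\<in>?I. \<Sum>j'\<in>?I. A i j * A i' j' * P4 i j i' j' \<omega>)"
      unfolding P2_def P4_def pr2 pr4 prod.distrib by (simp add: mult_ac)
    finally show ?thesis .
  qed
  have "integrable M (qform d k A X)"
    unfolding Qe using E2 by (intro Bochner_Integration.integrable_sum integrable_mult_right) auto
  moreover have "integrable M (\<lambda>\<omega>. (qform d k A X \<omega>)\<^sup>2)"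
    unfolding Q2e using E4 by (intro Bochner_Integration.integrable_sum integrable_mult_right) auto
  moreover have "expectation (qform d k A X) = (\<Sum>i\<in>?I. \<Sum>j\<in>?I. A i j * (\<Prod>l\<in>{1..k}. of_bool (i l = j l)))"
    unfolding Qe using E2
    by (subst Bochner_Integration.integral_sum, force intro: Bochner_Integration.integrable_sum integrable_mult_right)
       (intro sum.cong refl, subst Bochner_Integration.integral_sum, force intro: integrable_mult_right, simp)
  moreover have "expectation (\<lambda>\<omega>. (qform d k A X \<omega>)\<^sup>2) = (\<Sum>i\<in>?I. \<Sum>j\<in>?I. \<Sum>i'\<in>?I. \<Sum>j'\<in>?I.
      A i j * A i' j' * (\<Prod>l\<in>{1..k}. Dt l i j i' j' + Ut gauss l i j i' j' + Wt gauss l i j i' j'))"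
    unfolding Q2e using E4
    by (subst Bochner_Integration.integral_sum, force intro: Bochner_Integration.integrable_sum integrable_mult_right, intro sum.cong refl,
        subst Bochner_Integration.integral_sum, force intro: Bochner_Integration.integrable_sum integrable_mult_right, intro sum.cong refl,
        subst Bochner_Integration.integral_sum, force intro: Bochner_Integration.integrable_sum integrable_mult_right, intro sum.cong refl,
        subst Bochner_Integration.integral_sum, force intro: integrable_mult_right, simp)
  ultimately show ?thesis by blast
qed

theorem theorem2:
  fixes M :: "'a measure" and d k :: nat and A :: tmat
    and X :: "nat \<Rightarrow> nat \<Rightarrow> 'a \<Rightarrow> real"
    and gauss :: "nat \<Rightarrow> bool"
  assumes "prob_space M"
    and indep: "prob_space.indep_vars M (\<lambda>_. borel) (\<lambda>(l, a). X l a) ({1..k} \<times> {..<d})"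
    and gaussian: "\<And>l a. l \<in> {1..k} \<Longrightarrow> a < d \<Longrightarrow> gauss l \<Longrightarrow>
                      distributed M lborel (X l a) std_normal_density"
    and rademacher: "\<And>l a. l \<in> {1..k} \<Longrightarrow> a < d \<Longrightarrow> \<not> gauss l \<Longrightarrow>
                      rademacher_rv M (X l a)"
  shows "prob_space.variance M (qform d k A X)
           \<le> (\<Sum>S | S \<subset> {1..k}. 2 ^ (k - card S) * frob2 ({1..k} - S) d (ptrace d S A))
         \<and> ((\<forall>l\<in>{1..k}. gauss l) \<and> (\<forall>i\<in>midx {1..k} d. \<forall>j\<in>midx {1..k} d. A i j = abar k A i j) \<longrightarrow>
             prob_space.variance M (qform d k A X)
               = (\<Sum>S | S \<subset> {1..k}. 2 ^ (k - card S) * frob2 ({1..k} - S) d (ptrace d S A)))"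
proof -
  interpret prob_space M by fact
  have qm: "integrable M (qform d k A X) \<and> integrable M (\<lambda>\<omega>. (qform d k A X \<omega>)\<^sup>2)
    \<and> expectation (qform d k A X) = (\<Sum>i\<in>midx {1..k} d. \<Sum>j\<in>midx {1..k} d. A i j * (\<Prod>l\<in>{1..k}. of_bool (i l = j l)))
    \<and> expectation (\<lambda>\<omega>. (qform d k A X \<omega>)\<^sup>2) = (\<Sum>i\<in>midx {1..k} d. \<Sum>j\<in>midx {1..k} d. \<Sum>i'\<in>midx {1..k} d. \<Sum>j'\<in>midx {1..k} d.
      A i j * A i' j' * (\<Prod>l\<in>{1..k}. Dt l i j i' j' + Ut gauss l i j i' j' + Wt gauss l i j i' j'))"
    by (rule Q_moments[OF indep]) (use gaussian rademacher in auto)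
  have var: "variance (qform d k A X) = (\<Sum>S | S \<subset> {1..k}. \<Sum>V\<in>Pow ({1..k} - S). Hterm d gauss {1..k} S V A)"
  proof -
    have "variance (qform d k A X) = expectation (\<lambda>\<omega>. (qform d k A X \<omega>)\<^sup>2) - (expectation (qform d k A X))\<^sup>2"
      using qm by (intro variance_eq) auto
    also have "\<dots> = (\<Sum>S | S \<subset> {1..k}. \<Sum>V\<in>Pow ({1..k} - S). Hterm d gauss {1..k} S V A)"
      apply (subst qm[THEN conjunct2, THEN conjunct2, THEN conjunct1])
      apply (subst qm[THEN conjunct2, THEN conjunct2, THEN conjunct2])
      apply (rule var_decomp)
      done
    finally show ?thesis .
  qed
  show ?thesis
    unfolding var using alg_bound[where g=gauss and d=d and k=k and A=A] alg_eq[where g=gauss and d=d and k=k and A=A] by auto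
qed

end
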